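(* For $n\ge1$ and $k\ge1$, let $a_{n,k}(\tau)$ denote the number of cyclic permutations $\pi\in\mathfrak S_n$ whose one-line notation avoids $\delta_k=k(k-1)\cdots21$ and whose cycle form $C(\pi)$ avoids $\tau$. Then $a_{n,k}(312)=a_{n,k}(213)$ for all $n\ge1$, $k\ge1$. Consequently the generating functions $f_k(z;312)=\sum_{n\ge1}a_{n,k}(312)z^n$ and $f_k(z;213)=\sum_{n\ge1}a_{n,k}(213)z^n$ are equal.
   Context: A permutation $\pi\in\mathfrak S_n$ is cyclic if it consists of a single $n$-cycle. For cyclic $\pi$, $C(\pi)=(1,c_2,\dots,c_n)$ with $c_2=\pi(1)$, $c_{i+1}=\pi(c_i)$, viewed as the sequence $1c_2\cdots c_n$ for pattern avoidance. A sequence avoids a pattern $\sigma\in\mathfrak S_m$ if no subsequence of length $m$ is in the same relative order as $\sigma$. The one-line notation of $\pi$ is $\pi_1\cdots\pi_n$, $\pi_i=\pi(i)$. *)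

theory Defs
  imports "HOL-Combinatorics.Permutations" "HOL-Computational_Algebra.Formal_Power_Series"
begin

definition contains_pattern :: "nat list \<Rightarrow> nat list \<Rightarrow> bool" where
  "contains_pattern xs sigma \<longleftrightarrow>
     (\<exists>idx :: nat \<Rightarrow> nat.
        strict_mono_on {..<length sigma} idx \<and>
        (\<forall>j<length sigma. idx j < length xs) \<and>
        (\<forall>a<length sigma. \<forall>b<length sigma.
            (xs ! idx a < xs ! idx b) \<longleftrightarrow> (sigma ! a < sigma ! b)))"

definition avoids :: "nat list \<Rightarrow> nat list \<Rightarrow> bool" where
  "avoids xs sigma \<longleftrightarrow> \<not> contains_pattern xs sigma"

definition one_line :: "nat \<Rightarrow> (nat \<Rightarrow> nat) \<Rightarrow> nat list" where
  "one_line n p = map p [1..<n+1]"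

definition cycle_form :: "nat \<Rightarrow> (nat \<Rightarrow> nat) \<Rightarrow> nat list" where
  "cycle_form n p = map (\<lambda>i. (p ^^ i) 1) [0..<n]"

definition cyclic_perm :: "nat \<Rightarrow> (nat \<Rightarrow> nat) \<Rightarrow> bool" where
  "cyclic_perm n p \<longleftrightarrow> p permutes {1..n} \<and> set (cycle_form n p) = {1..n}"

definition delta :: "nat \<Rightarrow> nat list" where
  "delta k = rev [1..<k+1]"

definition a_count :: "nat \<Rightarrow> nat \<Rightarrow> nat list \<Rightarrow> nat" where
  "a_count n k tau = card {p. cyclic_perm n p \<and> avoids (one_line n p) (delta k)
                              \<and> avoids (cycle_form n p) tau}"

definition gf :: "nat \<Rightarrow> nat list \<Rightarrow> int fps" where
  "gf k tau = Abs_fps (\<lambda>n. if n \<ge> 1 then int (a_count n k tau) else 0)"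

end

theory Submission
  imports Defs
begin

lemma cp_cons:
  assumes "contains_pattern xs s" shows "contains_pattern (x # xs) s"
proof -
  from assms obtain idx where m: "strict_mono_on {..<length s} idx"
    and b: "\<forall>j<length s. idx j < length xs"
    and o: "\<forall>a<length s. \<forall>b<length s. (xs ! idx a < xs ! idx b) \<longleftrightarrow> (s ! a < s ! b)"
    unfolding contains_pattern_def by blast
  show ?thesis unfolding contains_pattern_def
    apply (rule exI[of _ "\<lambda>j. Suc (idx j)"])
    using m b o by (auto simp: strict_mono_on_def)
qed

lemma cp_uncons:
  assumes "contains_pattern (x # xs) s" "\<forall>y\<in>set xs. x \<le> y"
    "s = [3,1,2] \<or> s = [2,1,3]"
  shows "contains_pattern xs s"
proof -
  from assms(1) obtain idx where m: "strict_mono_on {..<length s} idx"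
    and b: "\<forall>j<length s. idx j < length (x#xs)"
    and o: "\<forall>a<length s. \<forall>b<length s. ((x#xs) ! idx a < (x#xs) ! idx b) \<longleftrightarrow> (s ! a < s ! b)"
    unfolding contains_pattern_def by blast
  have ls: "length s = 3" using assms(3) by auto
  have s10: "s ! 1 < s ! 0" using assms(3) by auto
  have i01: "idx 0 < idx 1" using m ls by (auto simp: strict_mono_on_def)
  have "idx 0 \<noteq> 0"
  proof
    assume z: "idx 0 = 0"
    have "(x#xs) ! idx 1 < (x#xs) ! idx 0" using o s10 ls by auto
    moreover have "idx 1 - 1 < length xs" using b[rule_format, of 1] ls i01 by simp
    ultimately show False using z i01 assms(2)
      by (metis Suc_pred' gr_zeroI nat_less_le nth_Cons_0 nth_Cons_Suc nth_mem
          order.asym order_le_less_trans)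
  qed
  then have pos: "\<forall>j<length s. idx j > 0"
    using m by (metis gr0I less_nat_zero_code strict_mono_on_def lessThan_iff not_gr0 bot_nat_0.not_eq_extremum)
  show ?thesis unfolding contains_pattern_def
  proof (rule exI[of _ "\<lambda>j. idx j - 1"], intro conjI allI impI)
    show "strict_mono_on {..<length s} (\<lambda>j. idx j - 1)"
      
    proof (rule strict_mono_onI)
      fix r t assume rt: "r \<in> {..<length s}" "t \<in> {..<length s}" "r < t"
      then have "idx r < idx t" "0 < idx r" using m pos unfolding strict_mono_on_def by auto
      then show "idx r - 1 < idx t - 1" by linarith
    qed
  next
    fix j assume "j < length s" then show "idx j - 1 < length xs" using b pos by force
  next
    fix a b' assume "a < length s" "b' < length s"
    then show "(xs ! (idx a - 1) < xs ! (idx b' - 1)) = (s ! a < s ! b')"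
      using o pos by (metis Suc_pred' nth_Cons_Suc)
  qed
qed

lemma cp_rev:
  assumes "contains_pattern xs s" shows "contains_pattern (rev xs) (rev s)"
proof -
  from assms obtain idx where m: "strict_mono_on {..<length s} idx"
    and b: "\<forall>j<length s. idx j < length xs"
    and o: "\<forall>a<length s. \<forall>b<length s. (xs ! idx a < xs ! idx b) \<longleftrightarrow> (s ! a < s ! b)"
    unfolding contains_pattern_def by blast
  let ?m = "length s" and ?l = "length xs"
  show ?thesis unfolding contains_pattern_def
  proof (rule exI[of _ "\<lambda>j. ?l - Suc (idx (?m - Suc j))"], intro conjI allI impI)
    show "strict_mono_on {..<length (rev s)} (\<lambda>j. ?l - Suc (idx (?m - Suc j)))"
      
    proof (rule strict_mono_onI)
      fix r t assume "r \<in> {..<length (rev s)}" "t \<in> {..<length (rev s)}" "r < t"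
      then have rt: "?m - Suc t < ?m - Suc r" "?m - Suc r < ?m" "?m - Suc t < ?m" by auto
      then have "idx (?m - Suc t) < idx (?m - Suc r)" "idx (?m - Suc r) < ?l"
        using m b unfolding strict_mono_on_def by auto
      then show "?l - Suc (idx (?m - Suc r)) < ?l - Suc (idx (?m - Suc t))" by linarith
    qed
  next
    fix j assume "j < length (rev s)" then show "?l - Suc (idx (?m - Suc j)) < length (rev xs)"
    proof -
      assume j: "j < length (rev s)"
      then have "idx (?m - Suc j) < ?l" using b by simp
      then show ?thesis by simp
    qed
  next
    fix a c assume ac: "a < length (rev s)" "c < length (rev s)"
    have ia: "idx (?m - Suc a) < ?l" and ic: "idx (?m - Suc c) < ?l" using ac b by auto
    have "rev xs ! (?l - Suc (idx (?m - Suc a))) = xs ! idx (?m - Suc a)"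
      using ia by (simp add: rev_nth Suc_diff_Suc)
    moreover have "rev xs ! (?l - Suc (idx (?m - Suc c))) = xs ! idx (?m - Suc c)"
      using ic by (simp add: rev_nth Suc_diff_Suc)
    moreover have "rev s ! a = s ! (?m - Suc a)" "rev s ! c = s ! (?m - Suc c)"
      using ac by (auto simp: rev_nth)
    ultimately show "(rev xs ! (?l - Suc (idx (?m - Suc a))) < rev xs ! (?l - Suc (idx (?m - Suc c))))
       = (rev s ! a < rev s ! c)" using o ac by auto
  qed
qed

lemma delta_nth: "a < k \<Longrightarrow> delta k ! a = k - a"
  unfolding delta_def by (simp add: rev_nth del: upt.simps)

lemma cp_delta:
  "contains_pattern xs (delta k) \<longleftrightarrow>
   (\<exists>idx. strict_mono_on {..<k} idx \<and> (\<forall>j<k. idx j < length xs) \<and>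
      (\<forall>a<k. \<forall>b<k. a < b \<longrightarrow> xs ! idx b < xs ! idx a))"
proof -
  have l: "length (delta k) = k" by (simp add: delta_def)
  have e: "(\<forall>a<k. \<forall>b<k. (xs ! idx a < xs ! idx b) \<longleftrightarrow> (delta k ! a < delta k ! b))
      \<longleftrightarrow> (\<forall>a<k. \<forall>b<k. a < b \<longrightarrow> xs ! idx b < xs ! idx a)" for idx
  proof
    assume H: "\<forall>a<k. \<forall>b<k. (xs ! idx a < xs ! idx b) \<longleftrightarrow> (delta k ! a < delta k ! b)"
    show "\<forall>a<k. \<forall>b<k. a < b \<longrightarrow> xs ! idx b < xs ! idx a"
    proof (intro allI impI)
      fix a b assume "a < k" "b < k" "a < b"
      then show "xs ! idx b < xs ! idx a" using H[rule_format, of b a] by (simp add: delta_nth)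
    qed
  next
    assume H: "\<forall>a<k. \<forall>b<k. a < b \<longrightarrow> xs ! idx b < xs ! idx a"
    show "\<forall>a<k. \<forall>b<k. (xs ! idx a < xs ! idx b) \<longleftrightarrow> (delta k ! a < delta k ! b)"
    proof (intro allI impI)
      fix a b assume ab: "a < k" "b < k"
      consider "a < b" | "a = b" | "b < a" by linarith
      then show "(xs ! idx a < xs ! idx b) \<longleftrightarrow> (delta k ! a < delta k ! b)"
      proof cases
        case 1
        then have "xs ! idx b < xs ! idx a" using H ab by blast
        then show ?thesis using ab 1 by (simp add: delta_nth)
      next
        case 2 then show ?thesis by simp
      next
        case 3
        then have "xs ! idx a < xs ! idx b" using H ab by blast
        then show ?thesis using ab 3 by (simp add: delta_nth)
      qed
    qed
  qed
  show ?thesis unfolding contains_pattern_def l e by blast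
qed

lemma one_line_nth: "j < n \<Longrightarrow> one_line n p ! j = p (j + 1)"
  unfolding one_line_def by (simp add: add.commute del: upt.simps)

lemma delta_inv:
  assumes pp: "p permutes {1..n}" and c: "contains_pattern (one_line n p) (delta k)"
  shows "contains_pattern (one_line n (inv p)) (delta k)"
proof -
  have ll: "length (one_line n p) = n" by (simp add: one_line_def)
  from c obtain idx where m: "strict_mono_on {..<k} idx"
    and b: "\<forall>j<k. idx j < n"
    and o0: "\<forall>a<k. \<forall>b<k. a < b \<longrightarrow> one_line n p ! idx b < one_line n p ! idx a"
    unfolding cp_delta ll by blast
  have o: "\<forall>a<k. \<forall>b<k. a < b \<longrightarrow> p (idx b + 1) < p (idx a + 1)"
  proof (intro allI impI)
    fix a b' assume "a < k" "b' < k" "a < b'"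
    then show "p (idx b' + 1) < p (idx a + 1)"
      using o0[rule_format, of a b'] b one_line_nth[of "idx a" n p] one_line_nth[of "idx b'" n p] by simp
  qed
  have inj: "inj p" using pp permutes_inj by blast
  have rng: "j < k \<Longrightarrow> p (idx j + 1) \<in> {1..n}" for j
    using b permutes_in_image[OF pp] by force
  show ?thesis unfolding cp_delta
  proof (rule exI[of _ "\<lambda>j. p (idx (k - Suc j) + 1) - 1"], intro conjI allI impI)
    show "strict_mono_on {..<k} (\<lambda>j. p (idx (k - Suc j) + 1) - 1)"
      
    proof (rule strict_mono_onI)
      fix r t assume "r \<in> {..<k}" "t \<in> {..<k}" "r < t"
      then have "p (idx (k - Suc r) + 1) < p (idx (k - Suc t) + 1)"
        "p (idx (k - Suc r) + 1) \<ge> 1" using o rng[of "k - Suc r"] by auto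
      then show "p (idx (k - Suc r) + 1) - 1 < p (idx (k - Suc t) + 1) - 1" by linarith
    qed
  next
    fix j assume "j < k"
    then show "p (idx (k - Suc j) + 1) - 1 < length (one_line n (inv p))"
      using rng[of "k - Suc j"] by (auto simp: one_line_def)
  next
    fix a c assume ac: "a < k" "c < k" "a < c"
    have ra: "p (idx (k - Suc a) + 1) - 1 < n" "p (idx (k - Suc a) + 1) \<ge> 1"
      and rc: "p (idx (k - Suc c) + 1) - 1 < n" "p (idx (k - Suc c) + 1) \<ge> 1"
      using rng[of "k - Suc a"] rng[of "k - Suc c"] ac by auto
    have "one_line n (inv p) ! (p (idx (k - Suc a) + 1) - 1) = idx (k - Suc a) + 1"
      using ra by (simp add: one_line_nth inv_f_f[OF inj])
    moreover have "one_line n (inv p) ! (p (idx (k - Suc c) + 1) - 1) = idx (k - Suc c) + 1"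
      using rc by (simp add: one_line_nth inv_f_f[OF inj])
    moreover have "idx (k - Suc c) < idx (k - Suc a)"
      using m ac by (auto simp: strict_mono_on_def)
    ultimately show "one_line n (inv p) ! (p (idx (k - Suc c) + 1) - 1)
        < one_line n (inv p) ! (p (idx (k - Suc a) + 1) - 1)" by simp
  qed
qed

lemma cyc_pow_n:
  assumes "cyclic_perm n p" "n \<ge> 1"
  shows "(p ^^ n) 1 = 1" and "distinct (cycle_form n p)"
proof -
  have pp: "p permutes {1..n}" and s: "set (cycle_form n p) = {1..n}"
    using assms unfolding cyclic_perm_def by auto
  have len: "length (cycle_form n p) = n" by (simp add: cycle_form_def)
  show d: "distinct (cycle_form n p)"
    by (rule card_distinct) (use s len in simp)
  have "(p ^^ (n - 1)) 1 \<in> {1..n}" using s assms(2) unfolding cycle_form_def by force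
  then have "p ((p ^^ (n - 1)) 1) \<in> {1..n}" using permutes_in_image[OF pp] by blast
  moreover have "p ((p ^^ (n - 1)) 1) = (p ^^ n) 1" using assms(2)
    by (metis Suc_diff_1 comp_apply funpow.simps(2) less_le_trans zero_less_one)
  ultimately have "(p ^^ n) 1 \<in> set (cycle_form n p)" using s by simp
  then obtain j where j: "j < n" "(p ^^ j) 1 = (p ^^ n) 1" unfolding cycle_form_def by auto
  have inj: "inj (p ^^ j)" using pp permutes_inj inj_fn by blast
  show "(p ^^ n) 1 = 1"
  proof (cases "j = 0")
    case True then show ?thesis using j by simp
  next
    case False
    have "(p ^^ n) 1 = (p ^^ j) ((p ^^ (n - j)) 1)" using j
      by (metis funpow_add le_add_diff_inverse less_imp_le_nat o_apply)
    then have "(p ^^ (n - j)) 1 = 1" using j inj injD by fastforce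
    then have "cycle_form n p ! (n - j) = cycle_form n p ! 0"
      using False j unfolding cycle_form_def by auto
    then have "n - j = 0" using nth_eq_iff_index_eq[OF d, of "n - j" 0] j len False by simp
    then show ?thesis using False j by simp
  qed
qed

lemma inv_pow:
  assumes "inj p" shows "(inv p ^^ i) ((p ^^ (i + m)) x) = (p ^^ m) x"
proof (induction i arbitrary: m)
  case 0 then show ?case by simp
next
  case (Suc i)
  have "(inv p ^^ Suc i) ((p ^^ (Suc i + m)) x) = inv p ((inv p ^^ i) ((p ^^ (i + Suc m)) x))"
    by simp
  also have "\<dots> = inv p ((p ^^ Suc m) x)" using Suc.IH[of "Suc m"] by (simp only:)
  also have "\<dots> = (p ^^ m) x" using inv_f_f[OF assms] by simp
  finally show ?case .
qed

lemma cycle_form_inv: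
  assumes "cyclic_perm n p" "n \<ge> 1"
  shows "cycle_form n (inv p) = 1 # rev (tl (cycle_form n p))"
proof (rule nth_equalityI)
  show "length (cycle_form n (inv p)) = length (1 # rev (tl (cycle_form n p)))"
    using assms(2) by (simp add: cycle_form_def)
next
  fix i assume "i < length (cycle_form n (inv p))"
  then have i: "i < n" by (simp add: cycle_form_def)
  have inj: "inj p" using assms unfolding cyclic_perm_def using permutes_inj by blast
  have pn: "(p ^^ n) 1 = 1" using cyc_pow_n assms by blast
  show "cycle_form n (inv p) ! i = (1 # rev (tl (cycle_form n p))) ! i"
  proof (cases i)
    case 0 then show ?thesis using i by (simp add: cycle_form_def)
  next
    case (Suc i')
    have "(inv p ^^ i) 1 = (inv p ^^ i) ((p ^^ (i + (n - i))) 1)" using pn i by simp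
    also have "\<dots> = (p ^^ (n - i)) 1" using inv_pow[OF inj] by blast
    finally have lhs: "cycle_form n (inv p) ! i = (p ^^ (n - i)) 1"
      using i by (simp add: cycle_form_def)
    have "(1 # rev (tl (cycle_form n p))) ! i = rev (tl (cycle_form n p)) ! i'" using Suc by simp
    also have "\<dots> = tl (cycle_form n p) ! (n - 1 - Suc i')"
      using i Suc by (simp add: rev_nth cycle_form_def)
    also have "\<dots> = cycle_form n p ! Suc (n - 1 - Suc i')"
      using i Suc by (intro nth_tl) (simp add: cycle_form_def)
    also have "\<dots> = cycle_form n p ! (n - i)" using i Suc by (simp add: Suc_diff_Suc)
    also have "\<dots> = (p ^^ (n - i)) 1" using i Suc by (simp add: cycle_form_def)
    finally show ?thesis using lhs by simp
  qed
qed

lemma cf_shape: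
  assumes "cyclic_perm n p" "n \<ge> 1"
  shows "cycle_form n p = 1 # tl (cycle_form n p)" "\<forall>y\<in>set (tl (cycle_form n p)). 1 \<le> y"
proof -
  have ne: "cycle_form n p \<noteq> []" "hd (cycle_form n p) = 1" using assms(2)
    by (auto simp: cycle_form_def hd_map)
  show "cycle_form n p = 1 # tl (cycle_form n p)" using ne by (metis list.collapse)
  have "set (tl (cycle_form n p)) \<subseteq> {1..n}" using assms unfolding cyclic_perm_def
    by (metis list.set_sel(2) ne(1) subsetI)
  then show "\<forall>y\<in>set (tl (cycle_form n p)). 1 \<le> y" by auto
qed

lemma main_map:
  assumes "cyclic_perm n p" "n \<ge> 1" "avoids (one_line n p) (delta k)"
    "avoids (cycle_form n p) s" "s = [3,1,2] \<and> t = [2,1,3] \<or> s = [2,1,3] \<and> t = [3,1,2]"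
  shows "cyclic_perm n (inv p) \<and> avoids (one_line n (inv p)) (delta k) \<and> avoids (cycle_form n (inv p)) t"
proof (intro conjI)
  have pp: "p permutes {1..n}" using assms unfolding cyclic_perm_def by blast
  have ip: "inv p permutes {1..n}" using permutes_inv[OF pp] .
  have cf: "cycle_form n (inv p) = 1 # rev (tl (cycle_form n p))" using cycle_form_inv assms by blast
  obtain T where T: "cycle_form n p = 1 # T" "\<forall>y\<in>set T. 1 \<le> y" using cf_shape[OF assms(1,2)] by blast
  have cf2: "cycle_form n (inv p) = 1 # rev T" using cf T by simp
  show "cyclic_perm n (inv p)" unfolding cyclic_perm_def
    using ip cf2 T assms(1) unfolding cyclic_perm_def by auto
  show "avoids (one_line n (inv p)) (delta k)"
    using assms(3) delta_inv[OF ip] unfolding avoids_def by (metis inv_inv_eq permutes_bij pp)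
  show "avoids (cycle_form n (inv p)) t" unfolding avoids_def cf2
  proof
    assume "contains_pattern (1 # rev T) t"
    then have "contains_pattern (rev T) t" using cp_uncons T(2) assms(5) by auto
    then have "contains_pattern T (rev t)" using cp_rev by fastforce
    then have "contains_pattern (1 # T) s" using cp_cons assms(5) by auto
    then show False using assms(4) T(1) unfolding avoids_def by simp
  qed
qed

lemma count_eq:
  assumes "n \<ge> 1" shows "a_count n k [3,1,2] = a_count n k [2,1,3]"
  unfolding a_count_def
proof (rule bij_betw_same_card[of inv], rule bij_betw_byWitness[where f' = inv])
  let ?A = "{p. cyclic_perm n p \<and> avoids (one_line n p) (delta k) \<and> avoids (cycle_form n p) [3,1,2]}"
  let ?B = "{p. cyclic_perm n p \<and> avoids (one_line n p) (delta k) \<and> avoids (cycle_form n p) [2,1,3]}"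
  show "\<forall>a\<in>?A. inv (inv a) = a"
    by (auto simp: cyclic_perm_def intro!: inv_inv_eq permutes_bij)
  show "\<forall>a\<in>?B. inv (inv a) = a"
    by (auto simp: cyclic_perm_def intro!: inv_inv_eq permutes_bij)
  show "inv ` ?A \<subseteq> ?B" using main_map[OF _ assms, of _ k "[3,1,2]" "[2,1,3]"] by auto
  show "inv ` ?B \<subseteq> ?A" using main_map[OF _ assms, of _ k "[2,1,3]" "[3,1,2]"] by auto
qed

theorem theorem2p10:
  shows "(\<forall>n\<ge>1. \<forall>k\<ge>1. a_count n k [3,1,2] = a_count n k [2,1,3])
       \<and> (\<forall>k\<ge>1. gf k [3,1,2] = gf k [2,1,3])"
proof (intro conjI allI impI)
  fix n k :: nat assume "n \<ge> 1" then show "a_count n k [3,1,2] = a_count n k [2,1,3]"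
    by (rule count_eq)
next
  fix k :: nat
  have "(\<lambda>n. if n \<ge> 1 then int (a_count n k [3,1,2]) else 0) =
        (\<lambda>n. if n \<ge> 1 then int (a_count n k [2,1,3]) else 0)"
    using count_eq by (intro ext) simp
  then show "gf k [3,1,2] = gf k [2,1,3]" unfolding gf_def by simp
qed

end
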